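(* Consider the following random process producing a new population (clade) of finite surreal forms from an existing finite population $\mathcal{C}$ of finite surreal forms. To create each member of the new clade independently: draw a number of parents $n_p \sim \mathrm{Poisson}(\lambda)$ with $\lambda>0$; select $n_p$ surreal forms from $\mathcal{C}$, each chosen independently with probability proportional to $w_{g(x)}$, where $(w_k)_{k\ge0}$ is a non-negative weighting depending only on the generation; sort the chosen parents into an ordered list $P$; choose a split point $s\in\{0,\dots,n_p\}$ from a split distribution $D_s(n_p)$; and set $x=\{X_L\mid X_R\}$ with $X_L=\{P[1],\dots,P[s]\}$ and $X_R=\{P[s+1],\dots,P[n_p]\}$ (each empty when the index range is empty). Let $g_k$ denote the proportion of members of $\mathcal{C}$ with generation $k$, let $Z=\sum_{i\ge0} g_i w_i$ (assumed positive), $z_k=g_k w_k/Z$ and $Z_k=\sum_{i=0}^k z_i$. Then for every $k\ge0$, the generation distribution of the new clade has CDF $$G'_{k+1} = e^{\lambda(Z_k-1)},$$ i.e. a member $x'$ of the new clade satisfies $\Pr[g(x')\le k+1]=e^{\lambda(Z_k-1)}$.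
   Context: A (short) surreal form is $x=\{X_L\mid X_R\}$ where $X_L,X_R$ are finite (possibly empty) sets of previously constructed surreal forms such that no element of $X_R$ is $\le$ any element of $X_L$; the base form is $\bar 0=\{\emptyset\mid\emptyset\}$. The elements of $X_L\cup X_R$ are the parents of $x$. The generation is defined by $g(\bar 0)=0$ and $g(x)=1+\max_{p\in X_L\cup X_R} g(p)$. *)

theory Defs
  imports "HOL-Probability.Probability" "HOL-Library.FSet"
begin

datatype form = Form "form fset" "form fset"

definition zero_form :: form where "zero_form = Form {||} {||}"

primrec gen :: "form \<Rightarrow> nat" where
  "gen (Form L R) =
     (if L = {||} \<and> R = {||} then 0 else Suc (fMax (fimage gen L |\<union>| fimage gen R)))"

text \<open>Conway's order x \<le> y: no left option xl of x with y \<le> xl and no right option yr of y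
  with yr \<le> x.  Defined by recursion on a fuel parameter; the fuel gen x + gen y suffices.\<close>
fun form_le_fuel :: "nat \<Rightarrow> form \<Rightarrow> form \<Rightarrow> bool" where
  "form_le_fuel 0 x y = True"
| "form_le_fuel (Suc n) (Form XL XR) (Form YL YR) =
     ((\<forall>xl\<in>fset XL. \<not> form_le_fuel n (Form YL YR) xl) \<and>
      (\<forall>yr\<in>fset YR. \<not> form_le_fuel n yr (Form XL XR)))"

definition form_le :: "form \<Rightarrow> form \<Rightarrow> bool" where
  "form_le x y = form_le_fuel (gen x + gen y) x y"

inductive surreal :: "form \<Rightarrow> bool" where
  "(\<forall>a\<in>fset L. surreal a) \<Longrightarrow> (\<forall>a\<in>fset R. surreal a) \<Longrightarrow>
   (\<forall>r\<in>fset R. \<forall>l\<in>fset L. \<not> form_le r l) \<Longrightarrow> surreal (Form L R)"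

definition gen_prop :: "form multiset \<Rightarrow> nat \<Rightarrow> real" where
  "gen_prop C k = real (size (filter_mset (\<lambda>x. gen x = k) C)) / real (size C)"

definition pick_parent :: "(nat \<Rightarrow> real) \<Rightarrow> form multiset \<Rightarrow> form pmf" where
  "pick_parent w C = embed_pmf (\<lambda>x. real (count C x) * w (gen x) /
       (\<Sum>y\<in>set_mset C. real (count C y) * w (gen y)))"

definition new_member ::
  "real \<Rightarrow> (nat \<Rightarrow> real) \<Rightarrow> (nat \<Rightarrow> nat pmf) \<Rightarrow> (form list \<Rightarrow> form list) \<Rightarrow> form multiset \<Rightarrow> form pmf" where
  "new_member lam w Ds srt C =
     do { np \<leftarrow> poisson_pmf lam;
          ps \<leftarrow> replicate_pmf np (pick_parent w C);
          s \<leftarrow> Ds np;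
          let P = srt ps;
          return_pmf (Form (fset_of_list (take s P)) (fset_of_list (drop s P))) }"

end

theory Submission
  imports Defs
begin

lemma poisson_integral:
  fixes lam q :: real
  assumes lam: "lam > 0" and q: "0 \<le> q"
  shows "(\<integral>n. q ^ n \<partial>measure_pmf (poisson_pmf lam)) = exp (lam * (q - 1))"
proof -
  have eq: "(\<lambda>n. pmf (poisson_pmf lam) n * q ^ n) = (\<lambda>n. exp (-lam) * ((lam*q)^n /\<^sub>R fact n))"
    using lam by (auto simp: fun_eq_iff power_mult_distrib field_simps)
  have s: "(\<lambda>n. pmf (poisson_pmf lam) n * q ^ n) sums (exp (-lam) * exp (lam*q))"
    unfolding eq by (intro sums_mult exp_converges)
  have int: "integrable (count_space UNIV) (\<lambda>n. pmf (poisson_pmf lam) n * q ^ n)"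
    unfolding integrable_count_space_nat_iff using s q
    by (simp add: sums_iff)
  have "(\<integral>n. q ^ n \<partial>measure_pmf (poisson_pmf lam)) = (\<integral>n. pmf (poisson_pmf lam) n * q ^ n \<partial>count_space UNIV)"
    unfolding measure_pmf_eq_density by (subst integral_density) auto
  also have "\<dots> = exp (-lam) * exp (lam*q)"
    using sums_integral_count_space_nat[OF int] s sums_unique2 by blast
  also have "\<dots> = exp (lam * (q - 1))" by (simp add: mult_exp_exp algebra_simps)
  finally show ?thesis .
qed

lemma replicate_all:
  fixes p :: "'a pmf"
  shows "pmf (map_pmf (\<lambda>xs. \<forall>x\<in>set xs. P x) (replicate_pmf n p)) True = measure_pmf.prob p {x. P x} ^ n"
proof (induction n)
  case 0
  then show ?case by simp
next
  case (Suc n)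
  let ?g = "\<lambda>xs. \<forall>x\<in>set xs. P x"
  have "map_pmf ?g (replicate_pmf (Suc n) p) =
        bind_pmf p (\<lambda>x. if P x then map_pmf ?g (replicate_pmf n p) else return_pmf False)"
    unfolding map_pmf_def
    by (auto simp: bind_assoc_pmf bind_return_pmf intro!: bind_pmf_cong)
  then have "pmf (map_pmf ?g (replicate_pmf (Suc n) p)) True =
     (\<integral>x. indicator {x. P x} x * measure_pmf.prob p {x. P x} ^ n \<partial>measure_pmf p)"
    unfolding \<open>map_pmf ?g (replicate_pmf (Suc n) p) = _\<close> pmf_bind
    using Suc by (intro Bochner_Integration.integral_cong) (auto split: split_indicator)
  also have "\<dots> = measure_pmf.prob p {x. P x} * measure_pmf.prob p {x. P x} ^ n"
    by simp
  finally show ?case by simp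
qed

lemma gen_Form_list:
  "gen (Form (fset_of_list A) (fset_of_list B)) \<le> Suc k \<longleftrightarrow> (\<forall>p\<in>set A \<union> set B. gen p \<le> k)"
proof (cases "A = [] \<and> B = []")
  case True then show ?thesis by simp
next
  case False
  let ?S = "gen |`| fset_of_list A |\<union>| gen |`| fset_of_list B"
  have ne: "?S \<noteq> {||}" using False by (auto simp: fset_of_list.rep_eq neq_Nil_conv)
  have "gen (Form (fset_of_list A) (fset_of_list B)) = Suc (fMax ?S)" using ne by auto
  moreover have "fMax ?S \<le> k \<longleftrightarrow> (\<forall>y. y |\<in>| ?S \<longrightarrow> y \<le> k)"
    using ne by (metis fMax_ge fMax_in order_trans)
  ultimately show ?thesis by (auto simp: fset_of_list.rep_eq)
qed

lemma size_filter_real: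
  "real (size (filter_mset P C)) = (\<Sum>y\<in>{y\<in>set_mset C. P y}. real (count C y))"
  by (simp add: size_multiset_overloaded_eq)

lemma gen_prop_w:
  "gen_prop C i * w i = (\<Sum>y\<in>{y\<in>set_mset C. gen y = i}. real (count C y) * w (gen y)) / real (size C)"
  unfolding gen_prop_def size_filter_real
  by (simp add: sum_distrib_right)

lemma Z_eq:
  "(\<Sum>i. gen_prop C i * w i) = (\<Sum>y\<in>set_mset C. real (count C y) * w (gen y)) / real (size C)"
proof -
  have "(\<Sum>i. gen_prop C i * w i) = (\<Sum>i\<in>gen ` set_mset C. gen_prop C i * w i)"
    by (rule suminf_finite) (auto simp: gen_prop_w intro!: sum.neutral)
  also have "\<dots> = (\<Sum>i\<in>gen ` set_mset C. (\<Sum>y\<in>{y\<in>set_mset C. gen y = i}. real (count C y) * w (gen y))) / real (size C)"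
    by (simp add: gen_prop_w sum_divide_distrib)
  also have "\<dots> = (\<Sum>y\<in>set_mset C. real (count C y) * w (gen y)) / real (size C)"
    by (subst sum.group) auto
  finally show ?thesis .
qed

lemma Zk_eq:
  "(\<Sum>i\<le>k. gen_prop C i * w i) = (\<Sum>y\<in>{y\<in>set_mset C. gen y \<le> k}. real (count C y) * w (gen y)) / real (size C)"
proof -
  have "(\<Sum>i\<le>k. gen_prop C i * w i) = (\<Sum>i\<le>k. (\<Sum>y\<in>{y\<in>{y\<in>set_mset C. gen y \<le> k}. gen y = i}. real (count C y) * w (gen y))) / real (size C)"
    by (simp add: gen_prop_w sum_divide_distrib) (intro sum.cong refl arg_cong2[where f=sum]; auto)
  also have "\<dots> = (\<Sum>y\<in>{y\<in>set_mset C. gen y \<le> k}. real (count C y) * w (gen y)) / real (size C)"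
    by (subst sum.group) auto
  finally show ?thesis .
qed

lemma pmf_pick:
  assumes w: "\<And>i. w i \<ge> 0" and D: "(\<Sum>y\<in>set_mset C. real (count C y) * w (gen y)) > 0"
  shows "pmf (pick_parent w C) x = real (count C x) * w (gen x) / (\<Sum>y\<in>set_mset C. real (count C y) * w (gen y))"
  unfolding pick_parent_def
proof (rule pmf_embed_pmf)
  let ?D = "\<Sum>y\<in>set_mset C. real (count C y) * w (gen y)"
  show "\<And>x. 0 \<le> real (count C x) * w (gen x) / ?D" using w D by auto
  have "(\<integral>\<^sup>+ x. ennreal (real (count C x) * w (gen x) / ?D) \<partial>count_space UNIV)
     = (\<Sum>x\<in>set_mset C. ennreal (real (count C x) * w (gen x) / ?D))"
    by (rule nn_integral_count_space') (auto simp: not_in_iff)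
  also have "\<dots> = ennreal (\<Sum>x\<in>set_mset C. real (count C x) * w (gen x) / ?D)"
    using w D by (subst sum_ennreal) auto
  also have "(\<Sum>x\<in>set_mset C. real (count C x) * w (gen x) / ?D) = 1"
    using D by (simp add: sum_divide_distrib[symmetric])
  finally show "(\<integral>\<^sup>+ x. ennreal (real (count C x) * w (gen x) / ?D) \<partial>count_space UNIV) = 1" by simp
qed

lemma set_pick:
  assumes w: "\<And>i. w i \<ge> 0" and D: "(\<Sum>y\<in>set_mset C. real (count C y) * w (gen y)) > 0"
  shows "set_pmf (pick_parent w C) \<subseteq> set_mset C"
  using pmf_pick[OF w D] by (auto simp: set_pmf_eq not_in_iff)

lemma prob_pick:
  assumes w: "\<And>i. w i \<ge> 0" and D: "(\<Sum>y\<in>set_mset C. real (count C y) * w (gen y)) > 0"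
  shows "measure_pmf.prob (pick_parent w C) {x. gen x \<le> k} =
     (\<Sum>y\<in>{y\<in>set_mset C. gen y \<le> k}. real (count C y) * w (gen y)) / (\<Sum>y\<in>set_mset C. real (count C y) * w (gen y))"
proof -
  let ?p = "pick_parent w C"
  have "measure_pmf.prob ?p {x. gen x \<le> k} = measure_pmf.prob ?p ({x. gen x \<le> k} \<inter> set_pmf ?p)"
    by (simp add: measure_Int_set_pmf)
  also have "{x. gen x \<le> k} \<inter> set_pmf ?p = {y\<in>set_mset C. gen y \<le> k} \<inter> set_pmf ?p"
    using set_pick[OF w D] by auto
  also have "measure_pmf.prob ?p \<dots> = measure_pmf.prob ?p {y\<in>set_mset C. gen y \<le> k}"
    by (simp add: measure_Int_set_pmf)
  also have "\<dots> = (\<Sum>y\<in>{y\<in>set_mset C. gen y \<le> k}. pmf ?p y)"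
    by (rule measure_measure_pmf_finite) auto
  finally show ?thesis by (simp add: pmf_pick[OF w D] sum_divide_distrib)
qed

theorem theorem1:
  fixes lam :: real and w :: "nat \<Rightarrow> real" and Ds :: "nat \<Rightarrow> nat pmf"
    and srt :: "form list \<Rightarrow> form list" and C :: "form multiset" and k :: nat
  assumes lam_pos: "lam > 0"
    and w_nonneg: "\<And>i. w i \<ge> 0"
    and C_nonempty: "C \<noteq> {#}"
    and C_surreal: "\<And>x. x \<in># C \<Longrightarrow> surreal x"
    and Z_pos: "(\<Sum>i. gen_prop C i * w i) > 0"
    and Ds_range: "\<And>n. set_pmf (Ds n) \<subseteq> {0..n}"
    and srt_perm: "\<And>xs. (\<forall>x\<in>set xs. surreal x) \<Longrightarrow> mset (srt xs) = mset xs"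
    and srt_sorted: "\<And>xs. (\<forall>x\<in>set xs. surreal x) \<Longrightarrow> sorted_wrt form_le (srt xs)"
  shows "measure_pmf.prob (new_member lam w Ds srt C) {x. gen x \<le> k + 1}
       = exp (lam * ((\<Sum>i\<le>k. gen_prop C i * w i / (\<Sum>j. gen_prop C j * w j)) - 1))"
proof -
  let ?D = "\<Sum>y\<in>set_mset C. real (count C y) * w (gen y)"
  let ?Dk = "\<Sum>y\<in>{y\<in>set_mset C. gen y \<le> k}. real (count C y) * w (gen y)"
  let ?p = "pick_parent w C"
  let ?q = "measure_pmf.prob ?p {x. gen x \<le> k}"
  have sz: "real (size C) > 0" using C_nonempty by (simp add: nonempty_has_size)
  have D: "?D > 0" using Z_pos sz unfolding Z_eq by (simp add: zero_less_divide_iff)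
  have q: "?q = ?Dk / ?D" by (rule prob_pick[OF w_nonneg D])
  have rhs: "(\<Sum>i\<le>k. gen_prop C i * w i / (\<Sum>j. gen_prop C j * w j)) = ?q"
    unfolding q sum_divide_distrib[symmetric] Zk_eq Z_eq using sz by simp
  let ?G = "\<lambda>x. gen x \<le> k + 1"
  have setp: "set_pmf ?p \<subseteq> set_mset C" by (rule set_pick[OF w_nonneg D])
  have key: "(gen (Form (fset_of_list (take s (srt ps))) (fset_of_list (drop s (srt ps)))) \<le> Suc k)
       = (\<forall>x\<in>set ps. gen x \<le> k)" if "ps \<in> set_pmf (replicate_pmf n ?p)" for ps s n
  proof -
    have "\<forall>x\<in>set ps. surreal x" using that setp C_surreal by (auto simp: set_replicate_pmf)
    then have "set (srt ps) = set ps" using srt_perm mset_eq_setD by blast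
    moreover have "set (take s (srt ps)) \<union> set (drop s (srt ps)) = set (srt ps)"
      by (metis append_take_drop_id set_append)
    ultimately show ?thesis using gen_Form_list[of "take s (srt ps)" "drop s (srt ps)" k] by (simp del: gen.simps)
  qed
  have M: "map_pmf ?G (new_member lam w Ds srt C) =
     bind_pmf (poisson_pmf lam) (\<lambda>np. map_pmf (\<lambda>ps. \<forall>x\<in>set ps. gen x \<le> k) (replicate_pmf np ?p))"
    unfolding new_member_def Let_def
    by (simp add: map_bind_pmf map_return_pmf del: gen.simps) (auto simp: key map_pmf_def simp del: gen.simps intro!: bind_pmf_cong)
  have "measure_pmf.prob (new_member lam w Ds srt C) {x. gen x \<le> k + 1}
      = pmf (map_pmf ?G (new_member lam w Ds srt C)) True"
    by (simp add: pmf_map vimage_def)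
  also have "\<dots> = (\<integral>np. ?q ^ np \<partial>measure_pmf (poisson_pmf lam))"
    unfolding M pmf_bind replicate_all ..
  also have "\<dots> = exp (lam * (?q - 1))"
    by (rule poisson_integral[OF lam_pos]) simp
  finally show ?thesis using rhs by simp
qed

end
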